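(* For every Hermitian $S=(s_{jl})\in\mathbb{C}^{4\times4}$ and every $\varepsilon\in\{1,-1\}$, $$\max\{p(\theta_1,\theta_2)^2-q(\theta_1,\theta_2):\theta_1,\theta_2\in(-\pi,\pi]\}\ge0 .$$
   Context: Let $S=(s_{jl})_{j,l=1}^4$ be a Hermitian $4\times4$ complex matrix (so $s_{jj}\in\mathbb{R}$ and $s_{lj}=\overline{s_{jl}}$) and $\varepsilon\in\{1,-1\}$. For $\theta_1,\theta_2\in\mathbb{R}$ define $$p=-\tfrac12\Big[s_{11}+s_{22}+s_{33}+s_{44}+2\varepsilon\operatorname{Re}(s_{12}\mathrm{e}^{i\theta_1})+2\varepsilon\operatorname{Re}(s_{34}\mathrm{e}^{i\theta_2})\Big],$$ $$\begin{aligned}q={}&-\big(|s_{13}|^2-s_{11}s_{33}+|s_{14}|^2-s_{11}s_{44}+|s_{23}|^2-s_{22}s_{33}+|s_{24}|^2-s_{22}s_{44}\big)\\&-2\varepsilon\Big[-(s_{33}+s_{44})\operatorname{Re}(s_{12}\mathrm{e}^{i\theta_1})+\operatorname{Re}\big((s_{13}\overline{s_{23}}+s_{14}\overline{s_{24}})\mathrm{e}^{i\theta_1}\big)\\&\qquad-(s_{11}+s_{22})\operatorname{Re}(s_{34}\mathrm{e}^{i\theta_2})+\operatorname{Re}\big((\overline{s_{13}}s_{14}+\overline{s_{23}}s_{24})\mathrm{e}^{i\theta_2}\big)\Big]\\&-2\operatorname{Re}\big((s_{14}\overline{s_{23}}-s_{12}s_{34})\mathrm{e}^{i(\theta_1+\theta_2)}\big)-2\operatorname{Re}\big((s_{13}\overline{s_{24}}-s_{12}\overline{s_{34}})\mathrm{e}^{i(\theta_1-\theta_2)}\big).\end{aligned}$$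 (These are the coefficients of the asymptotic band equation $d^2+2pd+q=0$ for a lattice with coupling $\Psi'_v=S\Psi_v$ at each vertex, where $\varepsilon=(-1)^n$.) *)

theory Defs
  imports "HOL-Analysis.Analysis"
begin

text \<open>A 4x4 complex matrix is indexed by the numeral type 4; the paper's index
  j = 1,2,3,4 corresponds to the elements 1,2,3,4 of type 4 (where 4 = 0 in type 4,
  a distinct fourth element).\<close>

definition hermitian4 :: "complex^4^4 \<Rightarrow> bool" where
  "hermitian4 S \<longleftrightarrow> (\<forall>j l. S $ l $ j = cnj (S $ j $ l))"

abbreviation ent :: "complex^4^4 \<Rightarrow> 4 \<Rightarrow> 4 \<Rightarrow> complex" where
  "ent S j l \<equiv> S $ j $ l"

definition band_p :: "complex^4^4 \<Rightarrow> real \<Rightarrow> real \<Rightarrow> real \<Rightarrow> real" where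
  "band_p S \<epsilon> \<theta>1 \<theta>2 = - (1/2) *
     (Re (ent S 1 1) + Re (ent S 2 2) + Re (ent S 3 3) + Re (ent S 4 4)
      + 2 * \<epsilon> * Re (ent S 1 2 * cis \<theta>1) + 2 * \<epsilon> * Re (ent S 3 4 * cis \<theta>2))"

definition band_q :: "complex^4^4 \<Rightarrow> real \<Rightarrow> real \<Rightarrow> real \<Rightarrow> real" where
  "band_q S \<epsilon> \<theta>1 \<theta>2 =
     - ((cmod (ent S 1 3))\<^sup>2 - Re (ent S 1 1) * Re (ent S 3 3)
        + (cmod (ent S 1 4))\<^sup>2 - Re (ent S 1 1) * Re (ent S 4 4)
        + (cmod (ent S 2 3))\<^sup>2 - Re (ent S 2 2) * Re (ent S 3 3)
        + (cmod (ent S 2 4))\<^sup>2 - Re (ent S 2 2) * Re (ent S 4 4))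
     - 2 * \<epsilon> *
       ( - (Re (ent S 3 3) + Re (ent S 4 4)) * Re (ent S 1 2 * cis \<theta>1)
         + Re ((ent S 1 3 * cnj (ent S 2 3) + ent S 1 4 * cnj (ent S 2 4)) * cis \<theta>1)
         - (Re (ent S 1 1) + Re (ent S 2 2)) * Re (ent S 3 4 * cis \<theta>2)
         + Re ((cnj (ent S 1 3) * ent S 1 4 + cnj (ent S 2 3) * ent S 2 4) * cis \<theta>2))
     - 2 * Re ((ent S 1 4 * cnj (ent S 2 3) - ent S 1 2 * ent S 3 4) * cis (\<theta>1 + \<theta>2))
     - 2 * Re ((ent S 1 3 * cnj (ent S 2 4) - ent S 1 2 * cnj (ent S 3 4)) * cis (\<theta>1 - \<theta>2))"

end

theory Submission
  imports Defs
begin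

definition G :: "real \<Rightarrow> real\<Rightarrow> real\<Rightarrow> real\<Rightarrow> complex\<Rightarrow> complex\<Rightarrow> complex\<Rightarrow> complex\<Rightarrow> complex\<Rightarrow> complex\<Rightarrow> real \<Rightarrow> complex \<Rightarrow> complex \<Rightarrow> real" where
"G d1 d2 d3 d4 z12 z13 z14 z23 z24 z34 e u v =
  (- (1/2) * (d1+d2+d3+d4 + 2*e*Re(z12*u) + 2*e*Re(z34* v)))\<^sup>2
  - (- ((cmod z13)\<^sup>2 - d1*d3 + (cmod z14)\<^sup>2 - d1*d4 + (cmod z23)\<^sup>2 - d2*d3 + (cmod z24)\<^sup>2 - d2*d4)
     - 2*e*( - (d3+d4)*Re(z12*u) + Re((z13*cnj z23 + z14*cnj z24)*u)
         - (d1+d2)*Re(z34* v) + Re((cnj z13*z14 + cnj z23*z24)* v))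
     - 2*Re((z14*cnj z23 - z12*z34)*(u* v))
     - 2*Re((z13*cnj z24 - z12*cnj z34)*(u* cnj v)))"

lemma Re_i: "Re (w * \<i>) = - Im w" "Re (w * - \<i>) = Im w" "Re (w * -1) = - Re w"
  by simp_all

lemma G_sum:
  assumes "e = 1 \<or> e = -1"
  shows "G d1 d2 d3 d4 z12 z13 z14 z23 z24 z34 e 1 1 + G d1 d2 d3 d4 z12 z13 z14 z23 z24 z34 e 1 (-1)
   + G d1 d2 d3 d4 z12 z13 z14 z23 z24 z34 e \<i> \<i> + G d1 d2 d3 d4 z12 z13 z14 z23 z24 z34 e \<i> (-\<i>)
   + G d1 d2 d3 d4 z12 z13 z14 z23 z24 z34 e (-1) (-1) + G d1 d2 d3 d4 z12 z13 z14 z23 z24 z34 e (-1) 1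
   + G d1 d2 d3 d4 z12 z13 z14 z23 z24 z34 e (-\<i>) (-\<i>) + G d1 d2 d3 d4 z12 z13 z14 z23 z24 z34 e (-\<i>) \<i>
   = 8 * (((d1+d2-d3-d4)/2)\<^sup>2 + ((Re z12)\<^sup>2 + (Im z12)\<^sup>2)/2 + ((Re z34)\<^sup>2 + (Im z34)\<^sup>2)/2
      + (cmod z13)\<^sup>2 + (cmod z14)\<^sup>2 + (cmod z23)\<^sup>2 + (cmod z24)\<^sup>2)"
using assms apply (elim disjE)
  unfolding G_def
  by (simp add: Re_i power2_eq_square field_simps)+

lemma cont: "continuous_on UNIV (\<lambda>x::real\<times>real. (band_p S e (fst x) (snd x))\<^sup>2 - band_q S e (fst x) (snd x))"
  unfolding band_p_def band_q_def
  by (intro continuous_intros)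

lemma gg_G: "(band_p S e t1 t2)\<^sup>2 - band_q S e t1 t2 =
  G (Re (ent S 1 1)) (Re (ent S 2 2)) (Re (ent S 3 3)) (Re (ent S 4 4)) (ent S 1 2) (ent S 1 3) (ent S 1 4)
    (ent S 2 3) (ent S 2 4) (ent S 3 4) e (cis t1) (cis t2)"
proof -
  have a: "cis (t1 + t2) = cis t1 * cis t2" by (simp add: cis_mult)
  have b: "cis (t1 - t2) = cis t1 * cnj (cis t2)" by (simp add: cis_cnj cis_mult)
  show ?thesis unfolding band_p_def band_q_def G_def a b ..
qed

lemma cis_vals: "cis 0 = 1" "cis (pi/2) = \<i>" "cis pi = -1" "cis (-(pi/2)) = -\<i>" "cis (-pi) = -1"
  by (simp_all add: complex_eq_iff)

theorem mainTheorem11: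
  fixes S :: "complex^4^4" and \<epsilon> :: real
  assumes "hermitian4 S" and "\<epsilon> \<in> {1, -1}"
  shows "\<exists>\<theta>1\<in>{-pi<..pi}. \<exists>\<theta>2\<in>{-pi<..pi}.
           (\<forall>t1\<in>{-pi<..pi}. \<forall>t2\<in>{-pi<..pi}.
              (band_p S \<epsilon> t1 t2)\<^sup>2 - band_q S \<epsilon> t1 t2
                \<le> (band_p S \<epsilon> \<theta>1 \<theta>2)\<^sup>2 - band_q S \<epsilon> \<theta>1 \<theta>2)
           \<and> (band_p S \<epsilon> \<theta>1 \<theta>2)\<^sup>2 - band_q S \<epsilon> \<theta>1 \<theta>2 \<ge> 0"
proof -
  define f where "f = (\<lambda>t1 t2. (band_p S \<epsilon> t1 t2)\<^sup>2 - band_q S \<epsilon> t1 t2)"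
  define g where "g = G (Re (ent S 1 1)) (Re (ent S 2 2)) (Re (ent S 3 3)) (Re (ent S 4 4)) (ent S 1 2) (ent S 1 3) (ent S 1 4)
    (ent S 2 3) (ent S 2 4) (ent S 3 4) \<epsilon>"
  have fg: "f t1 t2 = g (cis t1) (cis t2)" for t1 t2 unfolding f_def g_def by (rule gg_G)
  have co: "continuous_on (cbox (-pi,-pi) (pi,pi)) (\<lambda>x::real\<times>real. f (fst x) (snd x))"
    unfolding f_def by (rule continuous_on_subset[OF cont]) simp
  have ne: "cbox (-pi,-pi) (pi::real,pi::real) \<noteq> {}" by (simp add: cbox_Pair_eq)
  from continuous_attains_sup[OF compact_cbox ne co] obtain x where xin: "x \<in> cbox (-pi,-pi) (pi,pi)"
    and xmax: "\<And>y. y \<in> cbox (-pi,-pi) (pi,pi) \<Longrightarrow> f (fst y) (snd y) \<le> f (fst x) (snd x)"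
    by blast
  define a where "a = (if fst x = -pi then pi else fst x)"
  define b where "b = (if snd x = -pi then pi else snd x)"
  have xin': "-pi \<le> fst x" "fst x \<le> pi" "-pi \<le> snd x" "snd x \<le> pi"
    using xin by (cases x; simp add: cbox_Pair_eq)+
  have ain: "a \<in> {-pi<..pi}" "b \<in> {-pi<..pi}" unfolding a_def b_def using xin' pi_gt_zero by auto
  have cab: "cis a = cis (fst x)" "cis b = cis (snd x)" unfolding a_def b_def by (auto simp: cis_vals)
  have fab: "f a b = f (fst x) (snd x)" unfolding fg cab ..
  have le: "f t1 t2 \<le> f a b" if "t1 \<in> {-pi<..pi}" "t2 \<in> {-pi<..pi}" for t1 t2
    using xmax[of "(t1,t2)"] that fab by (simp add: cbox_Pair_eq)
  have pin: "0 \<in> {-pi<..pi}" "pi/2 \<in> {-pi<..pi}" "-(pi/2) \<in> {-pi<..pi}" "pi \<in> {-pi<..pi}"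
    using pi_gt_zero by (auto simp: field_simps)
  have e: "\<epsilon> = 1 \<or> \<epsilon> = -1" using assms(2) by auto
  have "0 \<le> g 1 1 + g 1 (-1) + g \<i> \<i> + g \<i> (-\<i>) + g (-1) (-1) + g (-1) 1 + g (-\<i>) (-\<i>) + g (-\<i>) \<i>"
    unfolding g_def G_sum[OF e] by simp
  hence "0 \<le> f 0 0 + f 0 pi + f (pi/2) (pi/2) + f (pi/2) (-(pi/2)) + f pi pi + f pi 0
     + f (-(pi/2)) (-(pi/2)) + f (-(pi/2)) (pi/2)"
    unfolding fg cis_vals .
  moreover have "f 0 0 \<le> f a b" using le pin by blast
  moreover have "f 0 pi \<le> f a b" using le pin by blast
  moreover have "f (pi/2) (pi/2) \<le> f a b" using le pin by blast
  moreover have "f (pi/2) (-(pi/2)) \<le> f a b" using le pin by blast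
  moreover have "f pi pi \<le> f a b" using le pin by blast
  moreover have "f pi 0 \<le> f a b" using le pin by blast
  moreover have "f (-(pi/2)) (-(pi/2)) \<le> f a b" using le pin by blast
  moreover have "f (-(pi/2)) (pi/2) \<le> f a b" using le pin by blast
  ultimately have "0 \<le> f a b" by linarith
  then have "\<exists>\<theta>1\<in>{-pi<..pi}. \<exists>\<theta>2\<in>{-pi<..pi}. (\<forall>t1\<in>{-pi<..pi}. \<forall>t2\<in>{-pi<..pi}. f t1 t2 \<le> f \<theta>1 \<theta>2) \<and> f \<theta>1 \<theta>2 \<ge> 0"
    using ain le by blast
  then show ?thesis unfolding f_def .
qed

end
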